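(* Let $N>1$ and $s,r\in\mathbb{N}$. The number of pairs $(a,b)\in\{1,\dots,N\}^2$ such that \[ \frac{b\,(s\,t^2+r\,t)}{s\,a^2+r\,a}\notin\mathbb{Z}\quad\text{for all integers }1\le t<a \] equals \[ \sum_{a=1}^{N}\ \sum_{J\subseteq\{1,\dots,a-1\}}(-1)^{|J|}\left\lfloor\frac{N}{\operatorname{lcm}(m_{a,t}:t\in J)}\right\rfloor, \qquad m_{a,t}=\frac{a(sa+r)}{\gcd\bigl(a(sa+r),\,t(st+r)\bigr)}. \]
   Context: $\mathbb{N}$ denotes the positive integers; $\operatorname{lcm}$ over the empty set is $1$. *)

theory Defs
  imports Complex_Main
begin

definition mval :: "nat \<Rightarrow> nat \<Rightarrow> nat \<Rightarrow> nat \<Rightarrow> nat" where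
  "mval s r a t = (a * (s * a + r)) div gcd (a * (s * a + r)) (t * (s * t + r))"

end

theory Submission
  imports Defs
begin

lemma card_multiples: "card {b\<in>{1..(N::nat)}. C dvd b} = N div C"
proof (cases "C = 0")
  case True
  then show ?thesis by auto
next
  case False
  have "{b\<in>{1..N}. C dvd b} = (\<lambda>k. C*k) ` {1..N div C}"
  proof (rule set_eqI, rule iffI)
    fix b assume "b \<in> {b\<in>{1..N}. C dvd b}"
    then obtain k where k: "b = C*k" "1 \<le> C*k" "C*k \<le> N" by auto
    have "k \<ge> 1" using k by (cases k) auto
    moreover have "k \<le> N div C" using k False
      by (metis div_le_mono nonzero_mult_div_cancel_left)
    ultimately show "b \<in> (\<lambda>k. C*k) ` {1..N div C}" using k by auto
  next
    fix b assume "b \<in> (\<lambda>k. C*k) ` {1..N div C}"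
    then obtain k where kk: "k \<in> {1..N div C}" "b = C*k" by blast
    then have k: "b = C*k" "1 \<le> k" "k \<le> N div C" by auto
    have "C*k \<le> C*(N div C)" using k by simp
    also have "\<dots> \<le> N" by simp
    finally show "b \<in> {b\<in>{1..N}. C dvd b}" using k False by auto
  qed
  moreover have "inj_on (\<lambda>k. C*k) {1..N div C}" using False by (auto intro: inj_onI)
  ultimately show ?thesis by (simp add: card_image)
qed

lemma incl_excl:
  fixes m :: "nat \<Rightarrow> nat"
  assumes "finite S"
  shows "int (card {b\<in>{1..N}. C dvd b \<and> (\<forall>t\<in>S. \<not> m t dvd b)})
       = (\<Sum>J\<in>Pow S. (-1) ^ card J * int (N div lcm C (Lcm (m ` J))))"
  using assms
proof (induction S arbitrary: C rule: finite_induct)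
  case empty
  then show ?case using card_multiples[of N C] by simp
next
  case (insert x S)
  let ?A = "{b\<in>{1..N}. C dvd b \<and> (\<forall>t\<in>S. \<not> m t dvd b)}"
  let ?B = "{b\<in>{1..N}. lcm C (m x) dvd b \<and> (\<forall>t\<in>S. \<not> m t dvd b)}"
  have eq: "{b\<in>{1..N}. C dvd b \<and> (\<forall>t\<in>insert x S. \<not> m t dvd b)} = ?A - ?B"
    by auto
  have sub: "?B \<subseteq> ?A" by auto
  have "int (card (?A - ?B)) = int (card ?A) - int (card ?B)"
    using sub by (simp add: card_Diff_subset of_nat_diff card_mono)
  also have "\<dots> = (\<Sum>J\<in>Pow S. (-1) ^ card J * int (N div lcm C (Lcm (m ` J))))
      - (\<Sum>J\<in>Pow S. (-1) ^ card J * int (N div lcm (lcm C (m x)) (Lcm (m ` J))))"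
    by (simp only: insert.IH)
  also have "\<dots> = (\<Sum>J\<in>Pow (insert x S). (-1) ^ card J * int (N div lcm C (Lcm (m ` J))))"
  proof -
    have "(\<Sum>J\<in>Pow (insert x S). (-1) ^ card J * int (N div lcm C (Lcm (m ` J))))
       = (\<Sum>J\<in>Pow S. (-1) ^ card J * int (N div lcm C (Lcm (m ` J))))
       + (\<Sum>J\<in>insert x ` Pow S. (-1) ^ card J * int (N div lcm C (Lcm (m ` J))))"
      unfolding Pow_insert by (rule sum.union_disjoint) (use insert.hyps in auto)
    also have "(\<Sum>J\<in>insert x ` Pow S. (-1) ^ card J * int (N div lcm C (Lcm (m ` J))))
       = (\<Sum>J\<in>Pow S. (-1) ^ card (insert x J) * int (N div lcm C (Lcm (m ` insert x J))))"
      by (subst sum.reindex) (use insert.hyps in \<open>auto intro!: inj_onI simp: o_def\<close>)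
    also have "\<dots> = (\<Sum>J\<in>Pow S. - ((-1) ^ card J * int (N div lcm (lcm C (m x)) (Lcm (m ` J)))))"
    proof (rule sum.cong)
      fix J assume J: "J \<in> Pow S"
      then have "finite J" "x \<notin> J" using insert.hyps finite_subset by auto
      then show "(-1) ^ card (insert x J) * int (N div lcm C (Lcm (m ` insert x J)))
          = - ((-1) ^ card J * int (N div lcm (lcm C (m x)) (Lcm (m ` J))))"
        by (simp add: lcm.assoc)
    qed simp
    finally show ?thesis by (simp add: sum_negf)
  qed
  finally show ?case using eq by simp
qed

lemma rat_int_iff:
  fixes x y :: nat
  assumes "y > 0"
  shows "(of_nat x / of_nat y :: rat) \<in> \<int> \<longleftrightarrow> y dvd x"
proof
  assume "y dvd x"
  then obtain k where "x = y * k" by auto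
  then have "(of_nat x / of_nat y :: rat) = of_nat k" using assms by simp
  then show "(of_nat x / of_nat y :: rat) \<in> \<int>" by simp
next
  assume "(of_nat x / of_nat y :: rat) \<in> \<int>"
  then obtain z where z: "(of_nat x / of_nat y :: rat) = of_int z" by (auto elim: Ints_cases)
  then have "(of_nat x :: rat) = of_int z * of_nat y" using assms by (simp add: field_simps)
  then have "(of_int (int x) :: rat) = of_int (z * int y)" by simp
  then have "int x = z * int y" by (simp only: of_int_eq_iff)
  then have "int y dvd int x" by simp
  then show "y dvd x" by simp
qed

lemma dvd_div_gcd_iff:
  fixes A T b :: nat
  assumes "A > 0"
  shows "A div gcd A T dvd b \<longleftrightarrow> A dvd b * T"
proof -
  obtain A' T' where AT: "A = A' * gcd A T" "T = T' * gcd A T" "coprime A' T'"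
    using gcd_coprime_exists[of A T] assms by auto
  have g: "gcd A T > 0" using assms by simp
  have "A div gcd A T = A'" using AT(1) g by (metis nonzero_mult_div_cancel_right less_not_refl2)
  moreover have "A dvd b * T \<longleftrightarrow> A' dvd b * T'"
  proof -
    have "A dvd b * T \<longleftrightarrow> A' * gcd A T dvd (b * T') * gcd A T"
      using AT by (metis mult.assoc)
    also have "\<dots> \<longleftrightarrow> A' dvd b * T'" using g by simp
    finally show ?thesis .
  qed
  moreover have "A' dvd b * T' \<longleftrightarrow> A' dvd b"
    using AT(3) by (simp add: coprime_dvd_mult_left_iff)
  ultimately show ?thesis by simp
qed

theorem theorem3p8:
  fixes N s r :: nat
  assumes "N > 1" and "s \<ge> 1" and "r \<ge> 1"
  shows "int (card {(a, b) \<in> {1..N} \<times> {1..N}.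
            \<forall>t::nat. 1 \<le> t \<and> t < a \<longrightarrow>
              (of_nat (b * (s * t^2 + r * t)) / of_nat (s * a^2 + r * a) :: rat) \<notin> \<int>})
       = (\<Sum>a = 1..N. \<Sum>J \<in> Pow {1..<a}.
            (-1) ^ card J * int (N div Lcm (mval s r a ` J)))"
proof -
  let ?F = "\<lambda>a. {b\<in>{1..N}. 1 dvd b \<and> (\<forall>t\<in>{1..<a}. \<not> mval s r a t dvd b)}"
  have seteq: "{(a, b) \<in> {1..N} \<times> {1..N}.
            \<forall>t::nat. 1 \<le> t \<and> t < a \<longrightarrow>
              (of_nat (b * (s * t^2 + r * t)) / of_nat (s * a^2 + r * a) :: rat) \<notin> \<int>}
        = Sigma {1..N} ?F"
  proof -
    have key: "(of_nat (b * (s * t^2 + r * t)) / of_nat (s * a^2 + r * a) :: rat) \<in> \<int>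
        \<longleftrightarrow> mval s r a t dvd b" if "a \<ge> 1" for a b t
    proof -
      have pos: "a * (s * a + r) > 0" using that assms by simp
      have e1: "s * a^2 + r * a = a * (s * a + r)" by (simp add: power2_eq_square algebra_simps)
      have e2: "s * t^2 + r * t = t * (s * t + r)" by (simp add: power2_eq_square algebra_simps)
      show ?thesis unfolding e1 e2 mval_def rat_int_iff[OF pos] dvd_div_gcd_iff[OF pos] ..
    qed
    show ?thesis using key by auto
  qed
  have "int (card (Sigma {1..N} ?F)) = (\<Sum>a=1..N. int (card (?F a)))"
    by (simp add: card_SigmaI)
  also have "\<dots> = (\<Sum>a = 1..N. \<Sum>J \<in> Pow {1..<a}.
            (-1) ^ card J * int (N div Lcm (mval s r a ` J)))"
    by (rule sum.cong) (simp_all add: incl_excl[where C=1, simplified])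
  finally show ?thesis using seteq by simp
qed

end
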